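(* (1) Let $q,m$ be positive integers with $q<m\le 2q$ and let $s\in\{2,3\}$. Then $K_{2q}^{RT}(2m,s,2ms-3)\le q\,\big(OCAN(3,m,s,2)+CAN(2,m,2)\big)$. (2) Let $q,v\ge2$ and $m,s,t$ be positive integers with $t\ge 2$, $s\le t\le ms$ and $(t-1)q+1\le m\le (t-1)qv$. Then $K_{qv}^{RT}(m,s,ms-t)\le q\,OCAN(t,m,s,v)$.
   Context: For positive integers $m,s$, the RT poset $[m\times s]$ is the set $\{1,\ldots,ms\}$ partitioned into $m$ blocks $B_i=\{is+1,\ldots,(i+1)s\}$; each block is a chain under the usual order of the integers, and elements of different blocks are incomparable. An ideal is a down-closed subset; an anti-ideal is the complement of an ideal; $\langle A\rangle$ denotes the smallest ideal containing $A$. For $x,y\in\mathbb{Z}_q^{ms}$, $d_{RT}(x,y)=|\langle\{i:x_i\neq y_i\}\rangle|$. A code $C\subseteq \mathbb{Z}_q^{ms}$ is an $R$-covering if every $x\in\mathbb{Z}_q^{ms}$ has some $c\in C$ with $d_{RT}(x,c)\le R$; $K_q^{RT}(m,s,R)$ is the smallest size of an $R$-covering. An ordered covering array $OCA(N;t,m,s,v)$ ($2\le t\le ms$) is an $N\times ms$ array over an alphabet of size $v$ with columns labeled by the elements of $[m\times s]$ such that for every anti-ideal $J$ of size $t$, every $t$-tuple over the alphabet appears as a row of the $N\times t$ subarray formed by the columns labeled by $J$; $OCAN(t,m,s,v)$ is the least such $N$. A covering array $CA(N;t,n,v)$ is an $OCA(N;t,n,1,v)$, i.e. an $N\times n$ array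 in which every set of $t$ columns contains every $t$-tuple as a row; $CAN(t,n,v)$ is the least such $N$. *)

theory Defs
  imports Main
begin

text \<open>RT poset [m x s], 0-indexed: elements 0..<m*s, block of i is i div s;
  x \<le>_RT y iff same block and x \<le> y.\<close>

definition rt_le :: "nat \<Rightarrow> nat \<Rightarrow> nat \<Rightarrow> bool" where
  "rt_le s x y \<longleftrightarrow> x div s = y div s \<and> x \<le> y"

definition rt_ideal :: "nat \<Rightarrow> nat \<Rightarrow> nat set \<Rightarrow> bool" where
  "rt_ideal m s I \<longleftrightarrow> I \<subseteq> {0..<m*s} \<and>
     (\<forall>y\<in>I. \<forall>x<m*s. rt_le s x y \<longrightarrow> x \<in> I)"

definition rt_anti_ideal :: "nat \<Rightarrow> nat \<Rightarrow> nat set \<Rightarrow> bool" where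
  "rt_anti_ideal m s J \<longleftrightarrow> J \<subseteq> {0..<m*s} \<and> rt_ideal m s ({0..<m*s} - J)"

definition rt_gen :: "nat \<Rightarrow> nat \<Rightarrow> nat set \<Rightarrow> nat set" where
  "rt_gen m s A = {x. x < m*s \<and> (\<exists>y\<in>A. rt_le s x y)}"

definition words :: "nat \<Rightarrow> nat \<Rightarrow> nat list set" where
  "words q n = {x. length x = n \<and> set x \<subseteq> {0..<q}}"

definition d_RT :: "nat \<Rightarrow> nat \<Rightarrow> nat list \<Rightarrow> nat list \<Rightarrow> nat" where
  "d_RT m s x y = card (rt_gen m s {i. i < m*s \<and> x ! i \<noteq> y ! i})"

definition rt_covering :: "nat \<Rightarrow> nat \<Rightarrow> nat \<Rightarrow> nat \<Rightarrow> nat list set \<Rightarrow> bool" where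
  "rt_covering q m s R C \<longleftrightarrow> C \<subseteq> words q (m*s) \<and>
     (\<forall>x\<in>words q (m*s). \<exists>c\<in>C. d_RT m s x c \<le> R)"

definition K_RT :: "nat \<Rightarrow> nat \<Rightarrow> nat \<Rightarrow> nat \<Rightarrow> nat" where
  "K_RT q m s R = (LEAST k. \<exists>C. rt_covering q m s R C \<and> card C = k)"

definition is_OCA :: "nat list list \<Rightarrow> nat \<Rightarrow> nat \<Rightarrow> nat \<Rightarrow> nat \<Rightarrow> bool" where
  "is_OCA A t m s v \<longleftrightarrow> 2 \<le> t \<and> t \<le> m*s \<and> set A \<subseteq> words v (m*s) \<and>
     (\<forall>J. rt_anti_ideal m s J \<and> card J = t \<longrightarrow>
        (\<forall>f. (\<forall>j\<in>J. f j < v) \<longrightarrow> (\<exists>r\<in>set A. \<forall>j\<in>J. r ! j = f j)))"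

definition OCAN :: "nat \<Rightarrow> nat \<Rightarrow> nat \<Rightarrow> nat \<Rightarrow> nat" where
  "OCAN t m s v = (LEAST N. \<exists>A. is_OCA A t m s v \<and> length A = N)"

definition CAN :: "nat \<Rightarrow> nat \<Rightarrow> nat \<Rightarrow> nat" where
  "CAN t n v = OCAN t n 1 v"

end

theory Submission imports Defs begin

definition upc :: "nat \<Rightarrow> nat \<Rightarrow> nat set \<Rightarrow> bool" where
  "upc m s J \<longleftrightarrow> J \<subseteq> {..<m*s} \<and> (\<forall>j\<in>J. \<forall>y<m*s. rt_le s j y \<longrightarrow> y \<in> J)"

lemma upc_anti: "upc m s J \<Longrightarrow> rt_anti_ideal m s J"
  unfolding upc_def rt_anti_ideal_def rt_ideal_def by auto

lemma upc_dist:
  assumes "upc m s J" and "\<forall>j\<in>J. x!j = c!j"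
  shows "d_RT m s x c \<le> m*s - card J"
proof -
  have "rt_gen m s {i. i < m*s \<and> x ! i \<noteq> c ! i} \<subseteq> {0..<m*s} - J"
    using assms unfolding upc_def rt_gen_def by fastforce
  then have "d_RT m s x c \<le> card ({0..<m*s} - J)"
    unfolding d_RT_def by (intro card_mono) auto
  also have "\<dots> = m*s - card J"
    using assms(1) unfolding upc_def by (subst card_Diff_subset) (auto intro: finite_subset)
  finally show ?thesis .
qed

definition tp :: "nat \<Rightarrow> nat \<Rightarrow> nat" where "tp s b = b*s + (s - 1)"

lemma tp_div: assumes "0 < s" shows "tp s b div s = b"
proof -
  have "tp s b = (s - 1) + b*s" unfolding tp_def by simp
  also have "\<dots> div s = b + (s - 1) div s" by (rule div_mult_self1) (use assms in simp)
  finally show ?thesis using assms by simp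
qed

lemma tp_lt: "0 < s \<Longrightarrow> b < m \<Longrightarrow> tp s b < m*s"
proof -
  assume "0 < s" "b < m"
  then have "Suc b * s \<le> m*s" by (intro mult_le_mono1) simp
  then have "b*s + s \<le> m*s" by simp
  then show ?thesis using \<open>0<s\<close> unfolding tp_def by linarith
qed

lemma tp_inj: "0 < s \<Longrightarrow> inj (tp s)"
  by (metis injI tp_div)

lemma rt_le_tp: "0 < s \<Longrightarrow> rt_le s (tp s b) y \<Longrightarrow> y = tp s b"
proof -
  assume s: "0 < s" and r: "rt_le s (tp s b) y"
  then have d: "y div s = b" and le: "tp s b \<le> y" unfolding rt_le_def using tp_div by auto
  have "y = b*s + y mod s" using div_mult_mod_eq[of y s] d by simp
  moreover have "y mod s < s" using s by simp
  ultimately have "y < b*s + s" by linarith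
  then show ?thesis using le unfolding tp_def using s by linarith
qed

lemma rt_le_tp1: "2 \<le> s \<Longrightarrow> rt_le s (tp s b - 1) y \<Longrightarrow> y = tp s b - 1 \<or> y = tp s b"
proof -
  assume s: "2 \<le> s" and r: "rt_le s (tp s b - 1) y"
  have "tp s b - 1 = (s - 2) + b*s" unfolding tp_def using s by simp
  also have "\<dots> div s = b + (s - 2) div s" by (rule div_mult_self1) (use s in simp)
  finally have "(tp s b - 1) div s = b" using s by simp
  then have d: "y div s = b" and le: "tp s b - 1 \<le> y" using r unfolding rt_le_def by auto
  have "y = b*s + y mod s" using div_mult_mod_eq[of y s] d by simp
  moreover have "y mod s < s" using s by simp
  ultimately have "y < b*s + s" by linarith
  then show ?thesis using le unfolding tp_def using s by linarith
qed

lemma upc_tops: assumes s: "0 < s" and B: "B \<subseteq> {..<m}" shows "upc m s (tp s ` B)"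
  unfolding upc_def
proof (intro conjI ballI allI impI)
  show "tp s ` B \<subseteq> {..<m*s}"
  proof
    fix j assume "j \<in> tp s ` B"
    then obtain b where "b \<in> B" "j = tp s b" by blast
    then show "j \<in> {..<m*s}" using tp_lt[OF s] B by auto
  qed
next
  fix j y assume j: "j \<in> tp s ` B" and "y < m*s" and r: "rt_le s j y"
  then obtain b where b: "b \<in> B" "j = tp s b" by blast
  then have "y = tp s b" using rt_le_tp[OF s] r by simp
  then show "y \<in> tp s ` B" using b by blast
qed

lemma OCA_ex:
  assumes "2 \<le> t" "t \<le> m*s" "0 < v"
  shows "\<exists>A. is_OCA A t m s v \<and> length A = OCAN t m s v"
proof -
  let ?A = "List.n_lists (m*s) [0..<v]"
  have "is_OCA ?A t m s v"
    unfolding is_OCA_def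
  proof (intro conjI allI impI)
    show "set ?A \<subseteq> words v (m*s)" unfolding words_def set_n_lists by auto
  next
    fix J f assume J: "rt_anti_ideal m s J \<and> card J = t" and f: "\<forall>j\<in>J. f j < v"
    let ?r = "map (\<lambda>j. if j \<in> J then f j else 0) [0..<m*s]"
    have "?r \<in> set ?A" unfolding set_n_lists using f assms(3) by auto
    moreover have "\<forall>j\<in>J. ?r ! j = f j" using J unfolding rt_anti_ideal_def by auto
    ultimately show "\<exists>r\<in>set ?A. \<forall>j\<in>J. r ! j = f j" by blast
  qed (use assms in auto)
  then have "\<exists>N. \<exists>A. is_OCA A t m s v \<and> length A = N" by blast
  from LeastI_ex[OF this] show ?thesis unfolding OCAN_def .
qed

lemma OCA_use:
  assumes "is_OCA A t m s v" "rt_anti_ideal m s J" "card J = t" "\<forall>j\<in>J. f j < v"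
  shows "\<exists>r\<in>set A. \<forall>j\<in>J. r ! j = f j"
proof -
  from assms(1) have H: "\<forall>J. rt_anti_ideal m s J \<and> card J = t \<longrightarrow>
        (\<forall>f. (\<forall>j\<in>J. f j < v) \<longrightarrow> (\<exists>r\<in>set A. \<forall>j\<in>J. r ! j = f j))"
    unfolding is_OCA_def by (elim conjE)
  have "rt_anti_ideal m s J \<and> card J = t" using assms(2,3) by simp
  from H[rule_format, of J f, OF this] assms(4) show ?thesis by blast
qed

lemma pigeon:
  assumes "\<forall>b<n. f b < (q::nat)" "(t-1)*q < n"
  shows "\<exists>k<q. \<exists>B. B \<subseteq> {b. b<n \<and> f b = k} \<and> card B = t"
proof (rule ccontr)
  assume "\<not> ?thesis"
  then have c: "\<forall>k<q. card {b. b<n \<and> f b = k} \<le> t - 1"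
  proof (intro allI impI)
    fix k assume "k < q"
    show "card {b. b<n \<and> f b = k} \<le> t - 1"
    proof (rule ccontr)
      assume "\<not> ?thesis"
      then have "t \<le> card {b. b<n \<and> f b = k}" by simp
      from obtain_subset_with_card_n[OF this] obtain B where "B \<subseteq> {b. b<n \<and> f b = k}" "card B = t" by blast
      then show False using \<open>\<not> (\<exists>k<q. _)\<close> \<open>k<q\<close> by blast
    qed
  qed
  have eq: "{..<n} = (\<Union>k<q. {b. b<n \<and> f b = k})" using assms(1) by auto
  have "card {..<n} \<le> (\<Sum>k<q. card {b. b<n \<and> f b = k})"
    unfolding eq by (rule card_UN_le) simp
  also have "\<dots> \<le> (\<Sum>k<q. t - 1)" using c by (intro sum_mono) auto
  also have "\<dots> = q * (t - 1)" by simp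
  finally have "n \<le> (t - 1) * q" by (simp add: mult.commute)
  then show False using assms(2) by linarith
qed

lemma tp1_div: assumes "2 \<le> s" shows "(tp s b - 1) div s = b"
proof -
  have "tp s b - 1 = (s - 2) + b*s" unfolding tp_def using assms by simp
  also have "\<dots> div s = b + (s - 2) div s" by (rule div_mult_self1) (use assms in simp)
  finally show ?thesis using assms by simp
qed

lemma cover_gen:
  assumes Rw: "R \<subseteq> words v (M*s)" and fin: "finite R" and s: "0 < s" and v: "0 < v"
    and H: "\<forall>B. B \<subseteq> {..<M} \<and> card B = t \<longrightarrow> (\<forall>f. (\<forall>b\<in>B. f b < v) \<longrightarrow>
              (\<exists>w\<in>R. \<forall>b\<in>B. w ! (tp s b) = f b))"
    and pig: "(t-1)*q < M"
  shows "K_RT (q*v) M s (M*s - t) \<le> q * card R"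
proof -
  define C where "C = (\<lambda>(k, w). map (\<lambda>a. k*v + a) w) ` ({..<q} \<times> R)"
  have cardC: "card C \<le> q * card R"
    unfolding C_def using card_image_le[of "{..<q} \<times> R"] fin by (simp add: card_cartesian_product)
  have Cw: "C \<subseteq> words (q*v) (M*s)"
  proof
    fix c assume "c \<in> C"
    then obtain k w where k: "k < q" and w: "w \<in> R" and c: "c = map (\<lambda>a. k*v + a) w"
      unfolding C_def by auto
    have "\<forall>a\<in>set w. k*v + a < q*v"
    proof
      fix a assume "a \<in> set w"
      then have "a < v" using w Rw unfolding words_def by fastforce
      then have "k*v + a < k*v + v" by simp
      also have "\<dots> = (k+1)*v" by simp
      also have "\<dots> \<le> q*v" using k by (intro mult_le_mono1) simp
      finally show "k*v + a < q*v" .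
    qed
    then show "c \<in> words (q*v) (M*s)" using w Rw c unfolding words_def by auto
  qed
  have cov: "\<forall>x\<in>words (q*v) (M*s). \<exists>c\<in>C. d_RT M s x c \<le> M*s - t"
  proof
    fix x assume x: "x \<in> words (q*v) (M*s)"
    have xl: "\<And>j. j < M*s \<Longrightarrow> x ! j < q*v" using x unfolding words_def
      by (auto simp: subset_iff)
    have col: "\<forall>b<M. x ! (tp s b) div v < q"
      using xl tp_lt[OF s] by (simp add: less_mult_imp_div_less)
    from pigeon[OF col pig] obtain k B where k: "k < q" and B: "B \<subseteq> {b. b<M \<and> x ! (tp s b) div v = k}"
      and cB: "card B = t" by blast
    have vl: "\<And>b. b \<in> B \<Longrightarrow> x ! (tp s b) mod v < v" using v by simp
    have BM: "B \<subseteq> {..<M} \<and> card B = t" using B cB by auto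
    obtain w where w: "w \<in> R" and wB: "\<forall>b\<in>B. w ! (tp s b) = x ! (tp s b) mod v"
      using H[rule_format, of B "\<lambda>b. x ! (tp s b) mod v", OF BM vl] by blast
    define c where "c = map (\<lambda>a. k*v + a) w"
    have cC: "c \<in> C" unfolding C_def c_def using k w by auto
    have lw: "length w = M*s" using w Rw unfolding words_def by auto
    have agree: "\<forall>j\<in>tp s ` B. x ! j = c ! j"
    proof
      fix j assume "j \<in> tp s ` B"
      then obtain b where b: "b \<in> B" and j: "j = tp s b" by auto
      have "b < M" using b B by auto
      then have "j < M*s" using j tp_lt[OF s] by simp
      then have "c ! j = k*v + w ! j" unfolding c_def using lw by simp
      also have "\<dots> = k*v + x ! j mod v" using wB b j by simp
      also have "\<dots> = x ! j"
      proof -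
        have "x ! j div v = k" using B b j by auto
        then show ?thesis using div_mult_mod_eq[of "x ! j" v] by simp
      qed
      finally show "x ! j = c ! j" by simp
    qed
    have u: "upc M s (tp s ` B)" using upc_tops[OF s] B by auto
    have "card (tp s ` B) = t" using cB tp_inj[OF s] by (simp add: card_image inj_on_subset)
    with upc_dist[OF u agree] cC show "\<exists>c\<in>C. d_RT M s x c \<le> M*s - t" by auto
  qed
  have "rt_covering (q*v) M s (M*s - t) C" unfolding rt_covering_def using Cw cov by auto
  then have "K_RT (q*v) M s (M*s - t) \<le> card C" unfolding K_RT_def by (intro Least_le) blast
  with cardC show ?thesis by simp
qed

lemma part2:
  assumes "2 \<le> q" "2 \<le> v" "0 < m" "0 < s" "2 \<le> t" "t \<le> m*s" "(t-1)*q + 1 \<le> m"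
  shows "K_RT (q*v) m s (m*s - t) \<le> q * OCAN t m s v"
proof -
  have v0: "0 < v" using assms by simp
  obtain A where A: "is_OCA A t m s v" "length A = OCAN t m s v"
    using OCA_ex[of t m s v] assms(5,6) v0 by blast
  have Rw: "set A \<subseteq> words v (m*s)" using A unfolding is_OCA_def by auto
  have H: "\<forall>B. B \<subseteq> {..<m} \<and> card B = t \<longrightarrow> (\<forall>f. (\<forall>b\<in>B. f b < v) \<longrightarrow>
              (\<exists>w\<in>set A. \<forall>b\<in>B. w ! (tp s b) = f b))"
  proof (intro allI impI)
    fix B f assume B: "B \<subseteq> {..<m} \<and> card B = t" and f: "\<forall>b\<in>B. f b < v"
    have "upc m s (tp s ` B)" by (rule upc_tops) (use assms B in auto)
    then have ai: "rt_anti_ideal m s (tp s ` B)" by (rule upc_anti)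
    have cJ: "card (tp s ` B) = t"
      using B card_image[OF inj_on_subset[OF tp_inj[OF assms(4)] subset_UNIV]] by simp
    have "\<forall>j\<in>tp s ` B. f (j div s) < v" using f tp_div assms by auto
    then obtain r where r: "r \<in> set A" "\<forall>j\<in>tp s ` B. r ! j = f (j div s)"
      using OCA_use[where f="\<lambda>j. f (j div s)", OF A(1) ai cJ] by blast
    have "\<forall>b\<in>B. r ! (tp s b) = f b"
    proof
      fix b assume "b \<in> B"
      then have "r ! (tp s b) = f (tp s b div s)" using r(2) by blast
      then show "r ! (tp s b) = f b" using tp_div[OF assms(4)] by simp
    qed
    then show "\<exists>w\<in>set A. \<forall>b\<in>B. w ! (tp s b) = f b" using r(1) by blast
  qed
  have "K_RT (q*v) m s (m*s - t) \<le> q * card (set A)"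
    by (rule cover_gen[OF Rw finite_set assms(4) v0 H]) (use assms(7) in linarith)
  also have "\<dots> \<le> q * OCAN t m s v" using A(2) card_length[of A] by simp
  finally show ?thesis .
qed

definition dup :: "nat \<Rightarrow> nat \<Rightarrow> nat list \<Rightarrow> nat list" where
  "dup m s r = map (\<lambda>j. r ! (j mod (m*s))) [0..<2*m*s]"

definition ee :: "nat \<Rightarrow> nat \<Rightarrow> nat list \<Rightarrow> nat list" where
  "ee m s bb = map (\<lambda>j. if j < m*s then bb ! (j div s) else 1 - bb ! ((j - m*s) div s)) [0..<2*m*s]"

lemma tp_shift: assumes "m \<le> b" shows "tp s b = m*s + tp s (b - m)"
proof -
  obtain d where d: "b = m + d" using assms le_Suc_ex by blast
  then show ?thesis unfolding tp_def by (simp add: algebra_simps)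
qed

lemma dup_tp:
  assumes s: "0 < s" and b: "b < 2*m"
  shows "dup m s r ! (tp s b) = r ! (tp s (b mod m))"
proof -
  have "tp s b < (2*m)*s" using tp_lt[OF s b] .
  then have 1: "dup m s r ! (tp s b) = r ! (tp s b mod (m*s))" unfolding dup_def by (simp add: mult.assoc)
  show ?thesis
  proof (cases "b < m")
    case True
    then show ?thesis using 1 tp_lt[OF s True] by simp
  next
    case False
    then have "b - m < m" using b by simp
    moreover have "b mod m = b - m" using False b by (simp add: le_mod_geq)
    ultimately show ?thesis using 1 tp_shift[of m b] tp_lt[OF s, of "b-m" m] False by simp
  qed
qed

lemma ee_tp:
  assumes s: "0 < s" and b: "b < 2*m"
  shows "ee m s bb ! (tp s b) = (if b < m then bb ! b else 1 - bb ! (b - m))"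
proof -
  have "tp s b < (2*m)*s" using tp_lt[OF s b] .
  then have 1: "ee m s bb ! (tp s b) = (if tp s b < m*s then bb ! (tp s b div s) else 1 - bb ! ((tp s b - m*s) div s))"
    unfolding ee_def by (simp add: mult.assoc)
  show ?thesis
  proof (cases "b < m")
    case True
    then show ?thesis using 1 tp_lt[OF s True] tp_div[OF s] by simp
  next
    case False
    then show ?thesis using 1 tp_shift[of m b] tp_div[OF s] by simp
  qed
qed

lemma two_res: "(x::nat) < 2*m \<Longrightarrow> x = x mod m \<or> x = x mod m + m"
  by (cases "x < m") (auto simp: le_mod_geq)

lemma pair_case:
  assumes s: "2 \<le> s" and A: "is_OCA A 3 m s 2" and BB: "is_OCA B 2 m 1 2"
    and b: "b < 2*m" and b': "b' < 2*m" and c: "c < 2*m" and bb': "b \<noteq> b'"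
    and res: "b mod m = b' mod m" and resc: "c mod m \<noteq> b mod m"
    and a: "a < 2" and a': "a' < 2" and ac: "ac < 2"
  shows "\<exists>w\<in>dup m s ` set A \<union> ee m s ` set B.
           w ! (tp s b) = a \<and> w ! (tp s b') = a' \<and> w ! (tp s c) = ac"
proof -
  have s0: "0 < s" using s by simp
  have m0: "0 < m" using b res resc by simp
  define i where "i = b mod m"
  define j where "j = c mod m"
  have i: "i < m" and j: "j < m" and ij: "i \<noteq> j" using m0 resc unfolding i_def j_def by auto
  show ?thesis
  proof (cases "a = a'")
    case True
    define J where "J = {tp s i - 1, tp s i, tp s j}"
    have t1: "1 \<le> tp s i" unfolding tp_def using s by simp
    have d1: "tp s i - 1 \<noteq> tp s i" using t1 by simp
    have d2: "tp s i - 1 \<noteq> tp s j" using tp1_div[OF s, of i] tp_div[OF s0, of j] ij by metis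
    have d3: "tp s i \<noteq> tp s j" using tp_div[OF s0] ij by metis
    have cJ: "card J = 3" unfolding J_def using d1 d2 d3 by simp
    have "upc m s J" unfolding upc_def J_def
      using tp_lt[OF s0 i] tp_lt[OF s0 j] rt_le_tp[OF s0] rt_le_tp1[OF s] by auto
    then have aJ: "rt_anti_ideal m s J" by (rule upc_anti)
    define g where "g = (\<lambda>x. if x = tp s j then ac else if x = tp s i then a else 0::nat)"
    have "\<forall>x\<in>J. g x < 2" unfolding g_def using a ac by auto
    then obtain r where r: "r \<in> set A" "\<forall>x\<in>J. r ! x = g x"
      using OCA_use[OF A aJ cJ, where f=g] by blast
    have "r ! tp s i = a" "r ! tp s j = ac" using r(2) d3 unfolding J_def g_def by auto
    then have "dup m s r ! tp s b = a" "dup m s r ! tp s b' = a'" "dup m s r ! tp s c = ac"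
      using dup_tp[OF s0 b, of r] dup_tp[OF s0 b', of r] dup_tp[OF s0 c, of r] res True
      unfolding i_def j_def by simp_all
    then show ?thesis using r(1) by blast
  next
    case False
    define lv where "lv = (if b < m then a else a')"
    define J where "J = {i, j}"
    have cJ: "card J = 2" unfolding J_def using ij by simp
    have "upc m 1 J" unfolding upc_def J_def rt_le_def using i j by auto
    then have aJ: "rt_anti_ideal m 1 J" by (rule upc_anti)
    define g where "g = (\<lambda>x. if x = i then lv else if c < m then ac else 1 - ac)"
    have "\<forall>x\<in>J. g x < 2" unfolding g_def lv_def using a a' ac by auto
    then obtain r where r: "r \<in> set B" "\<forall>x\<in>J. r ! x = g x"
      using OCA_use[OF BB aJ cJ, where f=g] by blast
    have ri: "r ! i = lv" and rj: "r ! j = (if c < m then ac else 1 - ac)"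
      using r(2) ij unfolding J_def g_def by auto
    have one: "b < m \<longleftrightarrow> \<not> b' < m"
      using two_res[OF b] two_res[OF b'] bb' res mod_less_divisor[OF m0, of b] by auto
    have bi: "b < m \<Longrightarrow> b = i" "\<not> b < m \<Longrightarrow> b - m = i" using b unfolding i_def by (auto simp: le_mod_geq)
    have bi': "b' < m \<Longrightarrow> b' = i" "\<not> b' < m \<Longrightarrow> b' - m = i" using b' res unfolding i_def by (auto simp: le_mod_geq)
    have cj: "c < m \<Longrightarrow> c = j" "\<not> c < m \<Longrightarrow> c - m = j" using c unfolding j_def by (auto simp: le_mod_geq)
    have "ee m s r ! tp s b = a" using ee_tp[OF s0 b] ri bi one False a a' unfolding lv_def by auto
    moreover have "ee m s r ! tp s b' = a'" using ee_tp[OF s0 b'] ri bi' one False a a' unfolding lv_def by auto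
    moreover have "ee m s r ! tp s c = ac" using ee_tp[OF s0 c] rj cj ac by auto
    ultimately show ?thesis using r(1) by blast
  qed
qed

lemma tri: "(x::nat) < 2*m \<Longrightarrow> y < 2*m \<Longrightarrow> z < 2*m \<Longrightarrow> x \<noteq> y \<Longrightarrow> x mod m = y mod m
   \<Longrightarrow> z mod m = x mod m \<Longrightarrow> z = x \<or> z = y"
  using two_res[of x m] two_res[of y m] two_res[of z m] by auto

lemma cover3:
  assumes s: "2 \<le> s" and A: "is_OCA A 3 m s 2" and BB: "is_OCA B 2 m 1 2"
    and b: "b1 < 2*m" "b2 < 2*m" "b3 < 2*m" and d: "b1 \<noteq> b2" "b2 \<noteq> b3" "b1 \<noteq> b3"
    and a: "a1 < 2" "a2 < 2" "a3 < 2"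
  shows "\<exists>w\<in>dup m s ` set A \<union> ee m s ` set B.
           w ! (tp s b1) = a1 \<and> w ! (tp s b2) = a2 \<and> w ! (tp s b3) = a3"
proof -
  have s0: "0 < s" using s by simp
  show ?thesis
  proof (cases "b1 mod m = b2 mod m")
    case True
    then have "b3 mod m \<noteq> b1 mod m" using tri[of b1 m b2 b3] b d by auto
    then show ?thesis using pair_case[OF s A BB b(1,2,3) d(1) True _ a] by blast
  next
    case n12: False
    show ?thesis
    proof (cases "b1 mod m = b3 mod m")
      case True
      then have "b2 mod m \<noteq> b1 mod m" using n12 by auto
      then show ?thesis using pair_case[OF s A BB b(1,3,2) d(3) True _ a(1,3,2)] by blast
    next
      case n13: False
      show ?thesis
      proof (cases "b2 mod m = b3 mod m")
        case True
        then have "b1 mod m \<noteq> b2 mod m" using n12 by auto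
        then show ?thesis using pair_case[OF s A BB b(2,3,1) d(2) True _ a(2,3,1)] by blast
      next
        case n23: False
        have m0: "0 < m" using b by auto
        define r1 where "r1 = b1 mod m"
        define r2 where "r2 = b2 mod m"
        define r3 where "r3 = b3 mod m"
        have rl: "{r1, r2, r3} \<subseteq> {..<m}" using m0 unfolding r1_def r2_def r3_def by auto
        have t12: "tp s r1 \<noteq> tp s r2" "tp s r1 \<noteq> tp s r3" "tp s r2 \<noteq> tp s r3"
          using n12 n13 n23 tp_div[OF s0] unfolding r1_def r2_def r3_def by metis+
        define J where "J = tp s ` {r1, r2, r3}"
        have cJ: "card J = 3" unfolding J_def using t12 by simp
        have aJ: "rt_anti_ideal m s J" unfolding J_def using upc_tops[OF s0 rl] upc_anti by blast
        define g where "g = (\<lambda>x. if x = tp s r1 then a1 else if x = tp s r2 then a2 else a3)"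
        have "\<forall>x\<in>J. g x < 2" unfolding g_def using a by auto
        then obtain r where r: "r \<in> set A" "\<forall>x\<in>J. r ! x = g x"
          using OCA_use[OF A aJ cJ, where f=g] by blast
        have "r ! tp s r1 = a1" "r ! tp s r2 = a2" "r ! tp s r3 = a3"
          using r(2) t12 unfolding J_def g_def by auto
        then show ?thesis using r(1) dup_tp[OF s0] b unfolding r1_def r2_def r3_def by auto
      qed
    qed
  qed
qed

lemma part1:
  assumes q: "0 < q" "q < m" and s: "s \<in> {2,3}"
  shows "K_RT (2*q) (2*m) s (2*m*s - 3) \<le> q * (OCAN 3 m s 2 + CAN 2 m 2)"
proof -
  have s2: "2 \<le> s" and s0: "0 < s" using s by auto
  have "2*2 \<le> m*s" using q s2 by (intro mult_le_mono) auto
  then obtain A where A: "is_OCA A 3 m s 2" "length A = OCAN 3 m s 2" using OCA_ex[of 3 m s 2] by auto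
  obtain B where B: "is_OCA B 2 m 1 2" "length B = CAN 2 m 2" using OCA_ex[of 2 m 1 2] q
    unfolding CAN_def by auto
  define R where "R = dup m s ` set A \<union> ee m s ` set B"
  have fin: "finite R" unfolding R_def by simp
  have cR: "card R \<le> OCAN 3 m s 2 + CAN 2 m 2"
  proof -
    have "card R \<le> card (dup m s ` set A) + card (ee m s ` set B)" unfolding R_def by (rule card_Un_le)
    also have "\<dots> \<le> card (set A) + card (set B)" by (intro add_mono card_image_le) auto
    also have "\<dots> \<le> length A + length B" by (intro add_mono card_length)
    finally show ?thesis using A B by simp
  qed
  have ms0: "0 < m*s" using q s0 by simp
  have Aw: "set A \<subseteq> words 2 (m*s)" and Bw: "set B \<subseteq> words 2 (m*1)" using A B unfolding is_OCA_def by auto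
  have Rw: "R \<subseteq> words 2 ((2*m)*s)"
  proof
    fix w assume "w \<in> R"
    then consider r where "r \<in> set A" "w = dup m s r" | bb where "bb \<in> set B" "w = ee m s bb"
      unfolding R_def by blast
    then show "w \<in> words 2 ((2*m)*s)"
    proof cases
      case 1
      have "\<And>j. r ! (j mod (m*s)) < 2"
      proof -
        fix j have "j mod (m*s) < length r" using 1 Aw ms0 unfolding words_def by auto
        then have "r ! (j mod (m*s)) \<in> set r" by simp
        moreover have "set r \<subseteq> {0..<2}" using 1 Aw unfolding words_def by auto
        ultimately show "r ! (j mod (m*s)) < 2" by auto
      qed
      then show ?thesis using 1 unfolding words_def dup_def by (auto simp: mult.assoc)
    next
      case 2
      have lb: "length bb = m" and eb: "set bb \<subseteq> {0..<2}" using 2 Bw unfolding words_def by auto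
      have "\<And>j. j < 2*m*s \<Longrightarrow> j < m*s \<Longrightarrow> bb ! (j div s) < 2"
      proof -
        fix j assume "j < m*s"
        then have "j div s < length bb" using lb by (simp add: less_mult_imp_div_less)
        then show "bb ! (j div s) < 2" using eb nth_mem by fastforce
      qed
      then show ?thesis using 2 unfolding words_def ee_def by (auto simp: mult.assoc)
    qed
  qed
  have H: "\<forall>Bs. Bs \<subseteq> {..<2*m} \<and> card Bs = 3 \<longrightarrow> (\<forall>f. (\<forall>b\<in>Bs. f b < 2) \<longrightarrow>
              (\<exists>w\<in>R. \<forall>b\<in>Bs. w ! (tp s b) = f b))"
  proof (intro allI impI)
    fix Bs and f :: "nat \<Rightarrow> nat" assume Bs: "Bs \<subseteq> {..<2*m} \<and> card Bs = 3" and f: "\<forall>b\<in>Bs. f b < 2"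
    then obtain x y z where xyz: "Bs = {x,y,z}" "x \<noteq> y" "y \<noteq> z" "x \<noteq> z" by (metis card_3_iff)
    have "x < 2*m" "y < 2*m" "z < 2*m" using Bs xyz by auto
    from cover3[OF s2 A(1) B(1) this xyz(2,3,4)] f xyz(1)
    show "\<exists>w\<in>R. \<forall>b\<in>Bs. w ! (tp s b) = f b" unfolding R_def by auto
  qed
  have "K_RT (q*2) (2*m) s ((2*m)*s - 3) \<le> q * card R"
    by (rule cover_gen[OF Rw fin s0 _ H]) (use q in auto)
  also have "\<dots> \<le> q * (OCAN 3 m s 2 + CAN 2 m 2)" using cR by simp
  finally show ?thesis by (simp add: mult.commute)
qed

theorem corollary5:
  shows "(\<forall>q m s::nat. 0 < q \<and> q < m \<and> m \<le> 2*q \<and> s \<in> {2,3} \<longrightarrow>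
            K_RT (2*q) (2*m) s (2*m*s - 3) \<le> q * (OCAN 3 m s 2 + CAN 2 m 2))
       \<and> (\<forall>q v m s t::nat. 2 \<le> q \<and> 2 \<le> v \<and> 0 < m \<and> 0 < s \<and> 2 \<le> t \<and> s \<le> t \<and> t \<le> m*s \<and>
            (t-1)*q + 1 \<le> m \<and> m \<le> (t-1)*q*v \<longrightarrow>
            K_RT (q*v) m s (m*s - t) \<le> q * OCAN t m s v)"
  using part1 part2 by blast

end
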